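(* Let $\ell\in\mathbb{N}$, $h\in\bigwedge(V_{2\ell}^* )$, and let $G$ be an Eulerian graph. Then the value $s_h((G,\omega,\kappa))$ is the same for every Eulerian orientation $\omega$ of $G$ and every local ordering $\kappa$ compatible with $\omega$.
   Context: Graphs may have loops and multiple edges; a graph is Eulerian if every vertex has even degree. $V_{2\ell}=\mathbb{C}^{2\ell}$ with standard basis $e_1,\dots,e_{2\ell}$; $f_i=-e_{i+\ell}$ for $i\le\ell$, $f_i=e_{i-\ell}$ for $i>\ell$. $\bigwedge(V_{2\ell}^* )=\bigoplus_{n=0}^{2\ell}\bigwedge^n(V_{2\ell}^* )$, and $h$ applied to an $n$-fold tensor means its component $h^n\in\bigwedge^n(V_{2\ell}^* )$ (a skew-symmetric $n$-linear form) applied to it. An Eulerian orientation $\omega$ orients each edge so each vertex has equal in- and out-degree (a loop contributes one incoming and one outgoing arc). A local ordering $\kappa$ compatible with $\omega$ consists, at each vertex $v$ of degree $d(v)$, of bijections $\kappa_v^-:\delta^-(v)\to\{1,3,\dots,d(v)-1\}$ (incoming arcs) and $\kappa_v^+:\delta^+(v)\to\{2,4,\dots,d(v)\}$ (outgoing arcs); $\kappa_v^{-1}(i)$ denotes the arc at $v$ with label $i$. $\kappa$ decomposes the edge set uniquely into closed walks $(v_1,a_1,\dots,a_i,v_i,a_{i+1},\dots,v_1)$ with $\kappa^-_{v_i}(a_i)+1=\kappa^+_{v_i}(a_{i+1})$ ($\kappa$-circuits); $c(G,\kappa)$ is their number. Define $s_h((G,\omega,\kappa))=(-1)^{c(G,\kappa)}\sum_{\phi:E(G)\to[2\ell]}\prod_{v\in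 V(G)} h\big(\bigotimes_{i=1,3,\dots,d(v)-1} e_{\phi(\kappa_v^{-1}(i))}\otimes f_{\phi(\kappa_v^{-1}(i+1))}\big)$. *)

theory Defs
  imports Complex_Main "HOL-Library.FuncSet"
begin

text \<open>Vectors of V_{2l} = C^{2l} are functions nat => complex supported on {1..2l}.\<close>

definition vecs :: "nat \<Rightarrow> (nat \<Rightarrow> complex) set" where
  "vecs l = {v. \<forall>j. j \<notin> {1..2*l} \<longrightarrow> v j = 0}"

definition ebasis :: "nat \<Rightarrow> nat \<Rightarrow> complex" where
  "ebasis i = (\<lambda>j. if j = i then 1 else 0)"

definition fbasis :: "nat \<Rightarrow> nat \<Rightarrow> nat \<Rightarrow> complex" where
  "fbasis l i = (if i \<le> l then (\<lambda>j. - ebasis (i + l) j) else ebasis (i - l))"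

text \<open>An element h of the exterior algebra of the dual: h n is its degree-n component,
  a skew-symmetric n-linear form on V_{2l}, applied to lists of n vectors.\<close>

definition multilinear_form :: "nat \<Rightarrow> nat \<Rightarrow> ((nat \<Rightarrow> complex) list \<Rightarrow> complex) \<Rightarrow> bool" where
  "multilinear_form l n H \<longleftrightarrow>
     (\<forall>xs k u w a b. length xs = n \<and> set xs \<subseteq> vecs l \<and> k < n \<and> u \<in> vecs l \<and> w \<in> vecs l \<longrightarrow>
        H (xs[k := (\<lambda>j. a * u j + b * w j)]) = a * H (xs[k := u]) + b * H (xs[k := w]))"

definition skew_form :: "nat \<Rightarrow> nat \<Rightarrow> ((nat \<Rightarrow> complex) list \<Rightarrow> complex) \<Rightarrow> bool" where
  "skew_form l n H \<longleftrightarrow>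
     (\<forall>xs i j. length xs = n \<and> set xs \<subseteq> vecs l \<and> i < j \<and> j < n \<longrightarrow>
        H (xs[i := xs ! j, j := xs ! i]) = - H xs)"

definition ext_dual :: "nat \<Rightarrow> (nat \<Rightarrow> (nat \<Rightarrow> complex) list \<Rightarrow> complex) \<Rightarrow> bool" where
  "ext_dual l h \<longleftrightarrow> (\<forall>n. multilinear_form l n (h n) \<and> skew_form l n (h n))"

text \<open>Graph: finite vertex set V, finite edge set E, each edge e has endpoints ends e
  (an unordered pair, stored as a pair; loops: fst = snd; multiple edges allowed).\<close>

definition graph :: "'v set \<Rightarrow> 'e set \<Rightarrow> ('e \<Rightarrow> 'v \<times> 'v) \<Rightarrow> bool" where
  "graph V E ends \<longleftrightarrow> finite V \<and> finite E \<and> (\<forall>e\<in>E. fst (ends e) \<in> V \<and> snd (ends e) \<in> V)"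

text \<open>Degree: loops count twice.\<close>
definition deg :: "'e set \<Rightarrow> ('e \<Rightarrow> 'v \<times> 'v) \<Rightarrow> 'v \<Rightarrow> nat" where
  "deg E ends v = card {e\<in>E. fst (ends e) = v} + card {e\<in>E. snd (ends e) = v}"

definition eulerian_graph :: "'v set \<Rightarrow> 'e set \<Rightarrow> ('e \<Rightarrow> 'v \<times> 'v) \<Rightarrow> bool" where
  "eulerian_graph V E ends \<longleftrightarrow> graph V E ends \<and> (\<forall>v\<in>V. even (deg E ends v))"

text \<open>An orientation assigns to each edge an ordered pair (tail, head).\<close>
definition orientation :: "'e set \<Rightarrow> ('e \<Rightarrow> 'v \<times> 'v) \<Rightarrow> ('e \<Rightarrow> 'v \<times> 'v) \<Rightarrow> bool" where
  "orientation E ends \<omega> \<longleftrightarrow> (\<forall>e\<in>E. \<omega> e = ends e \<or> \<omega> e = prod.swap (ends e))"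

definition eulerian_orientation ::
  "'v set \<Rightarrow> 'e set \<Rightarrow> ('e \<Rightarrow> 'v \<times> 'v) \<Rightarrow> ('e \<Rightarrow> 'v \<times> 'v) \<Rightarrow> bool" where
  "eulerian_orientation V E ends \<omega> \<longleftrightarrow> orientation E ends \<omega> \<and>
     (\<forall>v\<in>V. card {e\<in>E. snd (\<omega> e) = v} = card {e\<in>E. fst (\<omega> e) = v})"

text \<open>Local ordering: kin e is the label of arc e at its head (incoming there),
  kout e the label at its tail (outgoing there).\<close>
definition local_ordering ::
  "'v set \<Rightarrow> 'e set \<Rightarrow> ('e \<Rightarrow> 'v \<times> 'v) \<Rightarrow> ('e \<Rightarrow> 'v \<times> 'v) \<Rightarrow> ('e \<Rightarrow> nat) \<Rightarrow> ('e \<Rightarrow> nat) \<Rightarrow> bool" where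
  "local_ordering V E ends \<omega> kin kout \<longleftrightarrow>
     (\<forall>v\<in>V. bij_betw kin {e\<in>E. snd (\<omega> e) = v} {i. odd i \<and> i \<le> deg E ends v - 1}
          \<and> bij_betw kout {e\<in>E. fst (\<omega> e) = v} {i. even i \<and> 2 \<le> i \<and> i \<le> deg E ends v})"

definition in_arc :: "'e set \<Rightarrow> ('e \<Rightarrow> 'v \<times> 'v) \<Rightarrow> ('e \<Rightarrow> nat) \<Rightarrow> 'v \<Rightarrow> nat \<Rightarrow> 'e" where
  "in_arc E \<omega> kin v i = (THE e. e \<in> E \<and> snd (\<omega> e) = v \<and> kin e = i)"

definition out_arc :: "'e set \<Rightarrow> ('e \<Rightarrow> 'v \<times> 'v) \<Rightarrow> ('e \<Rightarrow> nat) \<Rightarrow> 'v \<Rightarrow> nat \<Rightarrow> 'e" where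
  "out_arc E \<omega> kout v i = (THE e. e \<in> E \<and> fst (\<omega> e) = v \<and> kout e = i)"

text \<open>Successor of an arc along its kappa-circuit: the arc leaving the head of e with label kin e + 1.\<close>
definition circ_next ::
  "'e set \<Rightarrow> ('e \<Rightarrow> 'v \<times> 'v) \<Rightarrow> ('e \<Rightarrow> nat) \<Rightarrow> ('e \<Rightarrow> nat) \<Rightarrow> 'e \<Rightarrow> 'e" where
  "circ_next E \<omega> kin kout e = out_arc E \<omega> kout (snd (\<omega> e)) (kin e + 1)"

text \<open>Number of kappa-circuits = number of orbits of the successor permutation on E.\<close>
definition num_circuits ::
  "'e set \<Rightarrow> ('e \<Rightarrow> 'v \<times> 'v) \<Rightarrow> ('e \<Rightarrow> nat) \<Rightarrow> ('e \<Rightarrow> nat) \<Rightarrow> nat" where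
  "num_circuits E \<omega> kin kout =
     card ((\<lambda>e. {e'. \<exists>n. (circ_next E \<omega> kin kout ^^ n) e = e'}) ` E)"

text \<open>The vector list e_{phi(kappa^-1(1))}, f_{phi(kappa^-1(2))}, ..., at vertex v.\<close>
definition vertex_args ::
  "nat \<Rightarrow> 'e set \<Rightarrow> ('e \<Rightarrow> 'v \<times> 'v) \<Rightarrow> ('e \<Rightarrow> 'v \<times> 'v) \<Rightarrow> ('e \<Rightarrow> nat) \<Rightarrow> ('e \<Rightarrow> nat)
     \<Rightarrow> ('e \<Rightarrow> nat) \<Rightarrow> 'v \<Rightarrow> (nat \<Rightarrow> complex) list" where
  "vertex_args l E ends \<omega> kin kout \<phi> v =
     concat (map (\<lambda>j. [ebasis (\<phi> (in_arc E \<omega> kin v (2*j+1))),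
                       fbasis l (\<phi> (out_arc E \<omega> kout v (2*j+2)))])
             [0..<deg E ends v div 2])"

definition s_h ::
  "nat \<Rightarrow> (nat \<Rightarrow> (nat \<Rightarrow> complex) list \<Rightarrow> complex) \<Rightarrow> 'v set \<Rightarrow> 'e set \<Rightarrow> ('e \<Rightarrow> 'v \<times> 'v)
     \<Rightarrow> ('e \<Rightarrow> 'v \<times> 'v) \<Rightarrow> ('e \<Rightarrow> nat) \<Rightarrow> ('e \<Rightarrow> nat) \<Rightarrow> complex" where
  "s_h l h V E ends \<omega> kin kout =
     (-1) ^ num_circuits E \<omega> kin kout *
     (\<Sum>\<phi>\<in>PiE E (\<lambda>_. {1..2*l}).
        \<Prod>v\<in>V. h (deg E ends v) (vertex_args l E ends \<omega> kin kout \<phi> v))"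

end

theory Submission
  imports Defs "HOL-Combinatorics.Orbits"
begin

lemma orb_remove:
  assumes fx: "f x \<noteq> x" and yx: "y \<noteq> x" and injf: "inj f"
  defines "g \<equiv> Transposition.transpose x (f x) \<circ> f"
  shows "{e'. \<exists>n. (g^^n) y = e'} = {e'. \<exists>n. (f^^n) y = e'} - {x}"
proof -
  have gz: "g z = (if z = x then x else if f z = x then f x else f z)" for z
    unfolding g_def using fx injf by (auto simp: Transposition.transpose_def dest: injD)
  have A: "\<exists>m. (f^^m) y = (g^^n) y \<and> (g^^n) y \<noteq> x" for n
  proof (induction n)
    case 0 then show ?case using yx by (intro exI[of _ 0]) simp
  next
    case (Suc n)
    then obtain m where m: "(f^^m) y = (g^^n) y" "(g^^n) y \<noteq> x" by blast
    show ?case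
    proof (cases "f ((g^^n) y) = x")
      case True
      then have 1: "(g^^Suc n) y = f x" using m(2) gz[of "(g^^n) y"] by simp
      have 2: "(f^^(Suc (Suc m))) y = f x" using m(1) True by simp
      show ?thesis by (rule exI[of _ "Suc (Suc m)"]) (simp only: 1 2 fx, simp)
    next
      case False
      then have 1: "(g^^Suc n) y = f ((g^^n) y)" using m(2) gz[of "(g^^n) y"] by simp
      have 2: "(f^^(Suc m)) y = f ((g^^n) y)" using m(1) by simp
      show ?thesis by (rule exI[of _ "Suc m"]) (simp only: 1 2 False, simp)
    qed
  qed
  have B: "(f^^n) y \<noteq> x \<longrightarrow> (\<exists>m. (g^^m) y = (f^^n) y)" for n
  proof (induction n rule: less_induct)
    case (less n)
    show ?case
    proof (cases n)
      case 0 then show ?thesis by (intro impI exI[of _ 0]) simp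
    next
      case (Suc k)
      show ?thesis
      proof (cases "(f^^k) y = x")
        case False
        have "k < n" using Suc by simp
        then obtain m where m: "(g^^m) y = (f^^k) y" using less False by blast
        show ?thesis
        proof
          assume ne: "(f^^n) y \<noteq> x"
          have fk: "f ((f^^k) y) = (f^^n) y" using Suc by simp
          have "(g^^Suc m) y = g ((f^^k) y)" using m by simp
          also have "\<dots> = f ((f^^k) y)" using gz[of "(f^^k) y"] False ne fk by simp
          finally have "(g^^Suc m) y = (f^^n) y" using fk by simp
          then show "\<exists>m. (g^^m) y = (f^^n) y" by blast
        qed
      next
        case True
        have "k \<noteq> 0" using yx True by (intro notI) simp
        then obtain j where kj: "k = Suc j" using not0_implies_Suc by blast
        have fj2: "f ((f^^j) y) = x" using True kj by simp
        have fj: "(f^^j) y \<noteq> x"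
        proof
          assume "(f^^j) y = x"
          then show False using fj2 fx by simp
        qed
        have "j < n" using Suc kj by simp
        then obtain m where m: "(g^^m) y = (f^^j) y" using less fj by blast
        have "(g^^Suc m) y = g ((f^^j) y)" using m by simp
        also have "\<dots> = f x" using gz[of "(f^^j) y"] fj fj2 by simp
        also have "\<dots> = (f^^n) y" using True Suc by simp
        finally show ?thesis by blast
      qed
    qed
  qed
  show ?thesis
  proof (intro set_eqI iffI)
    fix z assume "z \<in> {e'. \<exists>n. (g^^n) y = e'}"
    then obtain n where "(g^^n) y = z" by blast
    then show "z \<in> {e'. \<exists>n. (f^^n) y = e'} - {x}" using A[of n] by auto
  next
    fix z assume "z \<in> {e'. \<exists>n. (f^^n) y = e'} - {x}"
    then obtain n where "(f^^n) y = z" "z \<noteq> x" by blast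
    then show "z \<in> {e'. \<exists>n. (g^^n) y = e'}" using B[of n] by auto
  qed
qed

definition orbs :: "('a\<Rightarrow>'a) \<Rightarrow> 'a set \<Rightarrow> 'a set set" where
  "orbs f S = (\<lambda>e. {e'. \<exists>n. (f^^n) e = e'}) ` S"

lemma orb_eq_orbit: "permutation f \<Longrightarrow> {e'. \<exists>n. (f^^n) e = e'} = orbit f e"
  by (auto simp: orbit_altdef_permutation)

lemma orbs_sign:
  assumes "finite S" "f permutes S"
  shows "(-1::int) ^ card (orbs f S) = (-1) ^ card S * sign f"
  using assms
proof (induction S arbitrary: f rule: finite_induct)
  case empty
  then have "f = id" by (auto simp: permutes_def fun_eq_iff)
  then show ?case by (simp add: orbs_def)
next
  case (insert x F f)
  define g where "g = Transposition.transpose x (f x) \<circ> f"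
  have gp: "g permutes F" unfolding g_def by (rule permutes_insert_lemma[OF insert.prems])
  have IH: "(-1::int) ^ card (orbs g F) = (-1) ^ card F * sign g" using insert.IH gp by blast
  have permf: "permutation f" using insert.prems insert.hyps
    by (meson finite.insertI permutation_permutes)
  have injf: "inj f" using permutation_bijective[OF permf] bij_is_inj by blast
  have fin_or: "finite (orbs f F)" using insert.hyps by (simp add: orbs_def)
  have cF: "card (insert x F) = Suc (card F)" using insert.hyps by simp
  show ?case
  proof (cases "f x = x")
    case True
    then have gf: "g = f" unfolding g_def by simp
    have fp: "(f^^n) x = x" for n using True by (induction n) auto
    have ox: "{e'. \<exists>n. (f^^n) x = e'} = {x}"
      using fp by (auto intro: exI[of _ 0])
    have "orbs f (insert x F) = insert {x} (orbs f F)"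
      unfolding orbs_def using ox by (simp only: image_insert)
    moreover have "{x} \<notin> orbs f F"
    proof
      assume "{x} \<in> orbs f F"
      then obtain y where y: "y \<in> F" "{x} = {e'. \<exists>n. (f^^n) y = e'}" unfolding orbs_def by auto
      have "y \<in> {e'. \<exists>n. (f^^n) y = e'}" by (intro CollectI exI[of _ 0]) simp
      then have "y = x" using y(2) by blast
      then show False using \<open>y \<in> F\<close> insert.hyps by auto
    qed
    ultimately have "card (orbs f (insert x F)) = Suc (card (orbs f F))"
      using fin_or by simp
    then show ?thesis using IH gf cF by simp
  next
    case False
    have sg: "sign g = - sign f" unfolding g_def
      using sign_compose[OF permutation_swap_id permf, of x "f x"] False
      by (simp add: sign_swap_id)
    have fxF: "f x \<in> F" using False permutes_in_image[OF insert.prems, of x] by auto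
    have o1: "orbs f (insert x F) = orbs f F"
    proof -
      have "{e'. \<exists>n. (f^^n) x = e'} = {e'. \<exists>n. (f^^n) (f x) = e'}"
        unfolding orb_eq_orbit[OF permf] by (rule permutation_orbit_step[OF permf, symmetric])
      then have "{e'. \<exists>n. (f^^n) x = e'} \<in> orbs f F" unfolding orbs_def using fxF by blast
      then show ?thesis unfolding orbs_def by (simp only: image_insert insert_absorb)
    qed
    have o2: "orbs g F = (\<lambda>Q. Q - {x}) ` orbs f F"
    proof -
      have "orbs g F = (\<lambda>y. {e'. \<exists>n. (f^^n) y = e'} - {x}) ` F"
        unfolding orbs_def
      proof (rule image_cong[OF refl])
        fix y assume "y \<in> F" then have "y \<noteq> x" using insert.hyps by auto
        then show "{e'. \<exists>n. (g^^n) y = e'} = {e'. \<exists>n. (f^^n) y = e'} - {x}"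
          unfolding g_def by (rule orb_remove[OF False _ injf])
      qed
      then show ?thesis unfolding orbs_def by (simp add: image_image)
    qed
    have inj: "inj_on (\<lambda>Q. Q - {x}) (orbs f F)"
    proof
      fix Q1 Q2 assume Q1: "Q1 \<in> orbs f F" and Q2: "Q2 \<in> orbs f F" and eq: "Q1 - {x} = Q2 - {x}"
      obtain y1 where y1: "y1 \<in> F" "Q1 = orbit f y1"
        using Q1 orb_eq_orbit[OF permf] unfolding orbs_def by auto
      obtain y2 where y2: "y2 \<in> F" "Q2 = orbit f y2"
        using Q2 orb_eq_orbit[OF permf] unfolding orbs_def by auto
      have s1: "y1 \<in> orbit f y1" by (rule permutation_self_in_orbit[OF permf])
      have s2: "y2 \<in> orbit f y2" by (rule permutation_self_in_orbit[OF permf])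
      have "y1 \<noteq> x" using y1 insert.hyps by auto
      then have "y1 \<in> Q1 - {x}" using y1(2) s1 by simp
      then have "y1 \<in> Q2" unfolding eq by simp
      then have "y1 \<in> orbit f y2" using y2(2) by simp
      then have a: "orbit f y1 \<subseteq> orbit f y2" using orbit_trans[of _ f y1 y2] by blast
      have "y2 \<in> orbit f y1" using orbit_swap[OF s2 \<open>y1 \<in> orbit f y2\<close>] .
      then have b: "orbit f y2 \<subseteq> orbit f y1" using orbit_trans[of _ f y2 y1] by blast
      show "Q1 = Q2" using a b y1 y2 by simp
    qed
    have "card (orbs g F) = card (orbs f F)"
      unfolding o2 by (rule card_image[OF inj])
    then have cc: "card (orbs f (insert x F)) = card (orbs g F)" unfolding o1 by simp
    show ?thesis unfolding cc IH sg cF by simp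
  qed
qed

lemma hom_neg:
  assumes "ext_dual l h" "length xs = n" "set xs \<subseteq> vecs l" "k < n"
  shows "h n (xs[k := (\<lambda>j. - (xs!k) j)]) = - h n xs"
proof -
  have ml: "multilinear_form l n (h n)" using assms(1) unfolding ext_dual_def by blast
  have u: "xs!k \<in> vecs l" using assms(2,3,4) nth_mem by blast
  have "h n (xs[k := (\<lambda>j. (-1) * (xs!k) j + 0 * (xs!k) j)]) =
        (-1) * h n (xs[k := xs!k]) + 0 * h n (xs[k := xs!k])"
    using ml assms(2,3,4) u unfolding multilinear_form_def by blast
  moreover have "(\<lambda>j. (-1) * (xs!k) j + 0 * (xs!k) j) = (\<lambda>j. - (xs!k) j)" by simp
  ultimately show ?thesis by simp
qed

lemma skew2:
  assumes "ext_dual l h" "length xs = n" "set xs \<subseteq> vecs l" "i < n" "j < n" "i \<noteq> j"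
  shows "h n (xs[i := xs ! j, j := xs ! i]) = - h n xs"
proof (cases "i < j")
  case True
  then show ?thesis using assms unfolding ext_dual_def skew_form_def by blast
next
  case False
  then have ji: "j < i" using assms(6) by simp
  have "xs[i := xs ! j, j := xs ! i] = xs[j := xs ! i, i := xs ! j]"
    using assms(6) by (rule list_update_swap)
  then show ?thesis using assms ji unfolding ext_dual_def skew_form_def by metis
qed

lemma alt:
  assumes ext: "ext_dual l h" and fin: "finite K" and perm: "\<sigma> permutes K"
    and bij: "bij_betw P {..<d} K"
  shows "(\<forall>x\<in>K. F x \<in> vecs l) \<Longrightarrow>
     h d (map (\<lambda>k. F (\<sigma> (P k))) [0..<d]) = of_int (sign \<sigma>) * h d (map (\<lambda>k. F (P k)) [0..<d])"
  using perm fin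
proof (induction \<sigma> arbitrary: F rule: permutes_induct)
  case id
  then show ?case by simp
next
  case (swap a b p F)
  let ?t = "Transposition.transpose a b"
  have Ft: "\<forall>x\<in>K. (F \<circ> ?t) x \<in> vecs l"
    using swap.prems swap.hyps(1,2) by (auto simp: Transposition.transpose_def)
  have IH: "h d (map (\<lambda>k. F (?t (p (P k)))) [0..<d]) = of_int (sign p) * h d (map (\<lambda>k. F (?t (P k))) [0..<d])"
    using swap.IH[OF Ft] by (simp add: o_def)
  obtain i where i: "i < d" "P i = a" using bij swap.hyps(1) unfolding bij_betw_def by auto
  obtain j where j: "j < d" "P j = b" using bij swap.hyps(2) unfolding bij_betw_def by auto
  have ij: "i \<noteq> j" using i j swap.hyps(3) by auto
  define xs where "xs = map (\<lambda>k. F (P k)) [0..<d]"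
  have lxs: "length xs = d" unfolding xs_def by simp
  have sxs: "set xs \<subseteq> vecs l" unfolding xs_def using swap.prems bij
    by (auto simp: bij_betw_def)
  have e2: "map (\<lambda>k. F (?t (P k))) [0..<d] = xs[i := xs ! j, j := xs ! i]"
  proof (rule nth_equalityI)
    show "length (map (\<lambda>k. F (?t (P k))) [0..<d]) = length (xs[i := xs ! j, j := xs ! i])"
      using lxs by simp
  next
    fix k assume k: "k < length (map (\<lambda>k. F (?t (P k))) [0..<d])"
    then have kd: "k < d" by simp
    have inj: "inj_on P {..<d}" using bij by (simp add: bij_betw_def)
    show "map (\<lambda>k. F (?t (P k))) [0..<d] ! k = xs[i := xs ! j, j := xs ! i] ! k"
    proof -
      consider "k = j" | "k = i" | "k \<noteq> i \<and> k \<noteq> j" by blast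
      then show ?thesis
      proof cases
        case 1 then show ?thesis using i j kd lxs unfolding xs_def by simp
      next
        case 2 then show ?thesis using i j kd lxs ij unfolding xs_def by simp
      next
        case 3
        then have "P k \<noteq> a" "P k \<noteq> b" using i j kd inj by (metis inj_on_eq_iff lessThan_iff)+
        then show ?thesis using 3 kd lxs unfolding xs_def by (simp add: Transposition.transpose_def)
      qed
    qed
  qed
  have sk: "h d (xs[i := xs ! j, j := xs ! i]) = - h d xs"
    by (rule skew2[OF ext lxs sxs i(1) j(1) ij])
  have pp: "permutation p" using swap.hyps(4) fin
    using permutation_permutes by blast
  have sg: "sign (?t \<circ> p) = - sign p"
    using sign_compose[OF permutation_swap_id pp, of a b] swap.hyps(3) by (simp add: sign_swap_id)
  have "h d (map (\<lambda>k. F ((?t \<circ> p) (P k))) [0..<d]) = of_int (sign p) * (- h d xs)"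
    unfolding o_apply IH e2 sk by simp
  then show ?case unfolding sg xs_def by simp
qed

definition vf :: "nat \<Rightarrow> ('e \<Rightarrow> nat) \<Rightarrow> 'e \<times> bool \<Rightarrow> nat \<Rightarrow> complex" where
  "vf l \<phi> x = (if snd x then ebasis (\<phi> (fst x)) else fbasis l (\<phi> (fst x)))"

lemma concat_pairs: "concat (map (\<lambda>j. [F (2*j), F (2*j+1)]) [0..<n]) = map F [0..<2*n]"
  by (induction n) (auto simp: mult_2)

locale cfg =
  fixes V :: "'v set" and E :: "'e set" and ends :: "'e \<Rightarrow> 'v \<times> 'v"
    and \<omega> :: "'e \<Rightarrow> 'v \<times> 'v" and kin kout :: "'e \<Rightarrow> nat"
  assumes eg: "eulerian_graph V E ends" and eo: "eulerian_orientation V E ends \<omega>"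
    and lo: "local_ordering V E ends \<omega> kin kout"
begin

lemma finE: "finite E" using eg unfolding eulerian_graph_def graph_def by blast
lemma finV: "finite V" using eg unfolding eulerian_graph_def graph_def by blast

lemma ends_in: "e \<in> E \<Longrightarrow> snd (\<omega> e) \<in> V \<and> fst (\<omega> e) \<in> V"
proof -
  assume e: "e \<in> E"
  have "\<omega> e = ends e \<or> \<omega> e = prod.swap (ends e)" using eo e
    unfolding eulerian_orientation_def orientation_def by blast
  moreover have "fst (ends e) \<in> V \<and> snd (ends e) \<in> V" using eg e
    unfolding eulerian_graph_def graph_def by blast
  ultimately show ?thesis by (cases "ends e") auto
qed

lemma deg_even: "v \<in> V \<Longrightarrow> even (deg E ends v)"
  using eg unfolding eulerian_graph_def by blast

lemma kin_bij: "v \<in> V \<Longrightarrow> bij_betw kin {e\<in>E. snd (\<omega> e) = v} {i. odd i \<and> i \<le> deg E ends v - 1}"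
  using lo unfolding local_ordering_def by blast

lemma kout_bij: "v \<in> V \<Longrightarrow> bij_betw kout {e\<in>E. fst (\<omega> e) = v} {i. even i \<and> 2 \<le> i \<and> i \<le> deg E ends v}"
  using lo unfolding local_ordering_def by blast

lemma kin_range: "e \<in> E \<Longrightarrow> odd (kin e) \<and> kin e \<le> deg E ends (snd (\<omega> e)) - 1"
proof -
  assume e: "e \<in> E"
  have "snd (\<omega> e) \<in> V" using ends_in[OF e] by blast
  from kin_bij[OF this] e show ?thesis unfolding bij_betw_def by blast
qed

lemma kout_range: "e \<in> E \<Longrightarrow> even (kout e) \<and> 2 \<le> kout e \<and> kout e \<le> deg E ends (fst (\<omega> e))"
proof -
  assume e: "e \<in> E"
  have "fst (\<omega> e) \<in> V" using ends_in[OF e] by blast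
  from kout_bij[OF this] e show ?thesis unfolding bij_betw_def by blast
qed

lemma in_arc_prop:
  assumes v: "v \<in> V" and i: "odd i" "i \<le> deg E ends v - 1"
  shows "in_arc E \<omega> kin v i \<in> E \<and> snd (\<omega> (in_arc E \<omega> kin v i)) = v \<and> kin (in_arc E \<omega> kin v i) = i"
proof -
  have b: "bij_betw kin {e\<in>E. snd (\<omega> e) = v} {i. odd i \<and> i \<le> deg E ends v - 1}" by (rule kin_bij[OF v])
  have "i \<in> kin ` {e\<in>E. snd (\<omega> e) = v}" using b i unfolding bij_betw_def by simp
  then obtain e where e: "e \<in> E" "snd (\<omega> e) = v" "kin e = i" by blast
  have "in_arc E \<omega> kin v i = e" unfolding in_arc_def
  proof (rule the_equality)
    show "e \<in> E \<and> snd (\<omega> e) = v \<and> kin e = i" using e by blast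
  next
    fix e' assume "e' \<in> E \<and> snd (\<omega> e') = v \<and> kin e' = i"
    then show "e' = e" using b e unfolding bij_betw_def inj_on_def by auto
  qed
  then show ?thesis using e by simp
qed

lemma in_arc_kin: assumes e: "e \<in> E" shows "in_arc E \<omega> kin (snd (\<omega> e)) (kin e) = e"
proof -
  have v: "snd (\<omega> e) \<in> V" using ends_in[OF e] by blast
  have kr: "odd (kin e)" "kin e \<le> deg E ends (snd (\<omega> e)) - 1" using kin_range[OF e] by auto
  note p = in_arc_prop[OF v kr]
  have inj: "inj_on kin {e'\<in>E. snd (\<omega> e') = snd (\<omega> e)}" using kin_bij[OF v] unfolding bij_betw_def by blast
  show ?thesis by (rule inj_onD[OF inj]) (use p e in auto)
qed

lemma out_arc_prop:
  assumes v: "v \<in> V" and i: "even i" "2 \<le> i" "i \<le> deg E ends v"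
  shows "out_arc E \<omega> kout v i \<in> E \<and> fst (\<omega> (out_arc E \<omega> kout v i)) = v \<and> kout (out_arc E \<omega> kout v i) = i"
proof -
  have b: "bij_betw kout {e\<in>E. fst (\<omega> e) = v} {i. even i \<and> 2 \<le> i \<and> i \<le> deg E ends v}" by (rule kout_bij[OF v])
  have "i \<in> kout ` {e\<in>E. fst (\<omega> e) = v}" using b i unfolding bij_betw_def by simp
  then obtain e where e: "e \<in> E" "fst (\<omega> e) = v" "kout e = i" by blast
  have "out_arc E \<omega> kout v i = e" unfolding out_arc_def
  proof (rule the_equality)
    show "e \<in> E \<and> fst (\<omega> e) = v \<and> kout e = i" using e by blast
  next
    fix e' assume "e' \<in> E \<and> fst (\<omega> e') = v \<and> kout e' = i"
    then show "e' = e" using b e unfolding bij_betw_def inj_on_def by auto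
  qed
  then show ?thesis using e by simp
qed

lemma out_arc_kout: assumes e: "e \<in> E" shows "out_arc E \<omega> kout (fst (\<omega> e)) (kout e) = e"
proof -
  have v: "fst (\<omega> e) \<in> V" using ends_in[OF e] by blast
  have kr: "even (kout e)" "2 \<le> kout e" "kout e \<le> deg E ends (fst (\<omega> e))" using kout_range[OF e] by auto
  note p = out_arc_prop[OF v kr]
  have inj: "inj_on kout {e'\<in>E. fst (\<omega> e') = fst (\<omega> e)}" using kout_bij[OF v] unfolding bij_betw_def by blast
  show ?thesis by (rule inj_onD[OF inj]) (use p e in auto)
qed

definition R :: "'v \<Rightarrow> nat \<Rightarrow> 'e \<times> bool" where
  "R v k = (if even k then (in_arc E \<omega> kin v (k+1), True) else (out_arc E \<omega> kout v (k+1), False))"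

definition Kset :: "'v \<Rightarrow> ('e \<times> bool) set" where
  "Kset v = {x. fst x \<in> E \<and> (if snd x then snd (\<omega> (fst x)) = v else fst (\<omega> (fst x)) = v)}"

lemma Kset_fin: "finite (Kset v)"
proof -
  have "Kset v \<subseteq> E \<times> UNIV" unfolding Kset_def by auto
  moreover have "finite (E \<times> (UNIV :: bool set))" using finE by simp
  ultimately show ?thesis by (rule finite_subset)
qed

lemma R_in: assumes v: "v \<in> V" and k: "k < deg E ends v" shows "R v k \<in> Kset v"
proof (cases "even k")
  case True
  have "k + 1 \<noteq> deg E ends v"
  proof
    assume "k + 1 = deg E ends v"
    then have "even (k+1)" using deg_even[OF v] by simp
    then show False using True by simp
  qed
  then have kk: "k + 1 \<le> deg E ends v - 1" using k by simp
  have "odd (k+1)" using True by simp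
  note p = in_arc_prop[OF v this kk]
  show ?thesis using p True unfolding R_def Kset_def by simp
next
  case False
  have "0 < k" using False odd_pos by blast
  then have "even (k+1)" "2 \<le> k+1" "k+1 \<le> deg E ends v" using False k by auto
  then show ?thesis using out_arc_prop[OF v] False unfolding R_def Kset_def by simp
qed

lemma R_inj: assumes v: "v \<in> V" shows "inj_on (R v) {..<deg E ends v}"
proof
  fix k1 k2 assume k1: "k1 \<in> {..<deg E ends v}" and k2: "k2 \<in> {..<deg E ends v}" and eq: "R v k1 = R v k2"
  have par: "even k1 = even k2" using eq unfolding R_def by (auto split: if_splits)
  show "k1 = k2"
  proof (cases "even k1")
    case True
    have a1: "k1 + 1 \<le> deg E ends v - 1"
    proof -
      have "k1 + 1 \<noteq> deg E ends v"
      proof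
        assume "k1 + 1 = deg E ends v"
        then have "even (k1+1)" using deg_even[OF v] by simp
        then show False using True by simp
      qed
      then show ?thesis using k1 by simp
    qed
    have a2: "k2 + 1 \<le> deg E ends v - 1"
    proof -
      have "k2 + 1 \<noteq> deg E ends v"
      proof
        assume "k2 + 1 = deg E ends v"
        then have "even (k2+1)" using deg_even[OF v] by simp
        then show False using True par by simp
      qed
      then show ?thesis using k2 by simp
    qed
    have "in_arc E \<omega> kin v (k1+1) = in_arc E \<omega> kin v (k2+1)" using eq True par unfolding R_def by simp
    then have "kin (in_arc E \<omega> kin v (k1+1)) = kin (in_arc E \<omega> kin v (k2+1))" by simp
    then show ?thesis using in_arc_prop[OF v _ a1] in_arc_prop[OF v _ a2] True par by simp
  next
    case False
    have "0 < k1" "0 < k2" using False par odd_pos by auto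
    then have a1: "even (k1+1)" "2 \<le> k1+1" "k1+1 \<le> deg E ends v" using False k1 by auto
    have a2: "even (k2+1)" "2 \<le> k2+1" "k2+1 \<le> deg E ends v" using False par k2 \<open>0 < k2\<close> by auto
    have "out_arc E \<omega> kout v (k1+1) = out_arc E \<omega> kout v (k2+1)" using eq False par unfolding R_def by simp
    then have "kout (out_arc E \<omega> kout v (k1+1)) = kout (out_arc E \<omega> kout v (k2+1))" by simp
    then show ?thesis using out_arc_prop[OF v a1] out_arc_prop[OF v a2] by simp
  qed
qed

lemma R_surj: assumes v: "v \<in> V" and x: "x \<in> Kset v" shows "\<exists>k<deg E ends v. R v k = x"
proof (cases "snd x")
  case True
  define e where "e = fst x"
  have e: "e \<in> E" "snd (\<omega> e) = v" using x True unfolding Kset_def e_def by auto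
  have kr: "odd (kin e)" "kin e \<le> deg E ends v - 1" using kin_range[OF e(1)] e by auto
  define k where "k = kin e - 1"
  have k1: "k + 1 = kin e" using kr(1) unfolding k_def by (cases "kin e") auto
  have ek: "even k" using kr(1) k1 by (metis even_add odd_one)
  have kd: "k < deg E ends v" using kr k1 by linarith
  have "R v k = (in_arc E \<omega> kin v (kin e), True)" unfolding R_def using ek k1 by simp
  also have "\<dots> = x" using in_arc_kin[OF e(1)] e True unfolding e_def by (cases x) auto
  finally show ?thesis using kd by blast
next
  case False
  define e where "e = fst x"
  have e: "e \<in> E" "fst (\<omega> e) = v" using x False unfolding Kset_def e_def by auto
  have kr: "even (kout e)" "2 \<le> kout e" "kout e \<le> deg E ends v" using kout_range[OF e(1)] e by auto
  define k where "k = kout e - 1"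
  have k1: "k + 1 = kout e" using kr(2) unfolding k_def by simp
  have ek: "odd k" using kr(1) k1 by (metis even_add odd_one)
  have kd: "k < deg E ends v" using kr k1 by linarith
  have "R v k = (out_arc E \<omega> kout v (kout e), False)" unfolding R_def using ek k1 by simp
  also have "\<dots> = x" using out_arc_kout[OF e(1)] e False unfolding e_def by (cases x) auto
  finally show ?thesis using kd by blast
qed

lemma R_bij: assumes v: "v \<in> V" shows "bij_betw (R v) {..<deg E ends v} (Kset v)"
proof -
  have "R v ` {..<deg E ends v} = Kset v"
  proof
    show "R v ` {..<deg E ends v} \<subseteq> Kset v" using R_in[OF v] by blast
    show "Kset v \<subseteq> R v ` {..<deg E ends v}" using R_surj[OF v] by blast
  qed
  then show ?thesis using R_inj[OF v] unfolding bij_betw_def by blast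
qed

lemma vargs: assumes v: "v \<in> V"
  shows "vertex_args l E ends \<omega> kin kout \<phi> v = map (\<lambda>k. vf l \<phi> (R v k)) [0..<deg E ends v]"
proof -
  have d: "2 * (deg E ends v div 2) = deg E ends v" using deg_even[OF v] by simp
  have "vertex_args l E ends \<omega> kin kout \<phi> v =
     concat (map (\<lambda>j. [vf l \<phi> (R v (2*j)), vf l \<phi> (R v (2*j+1))]) [0..<deg E ends v div 2])"
    unfolding vertex_args_def vf_def R_def by (simp add: add.commute)
  also have "\<dots> = map (\<lambda>k. vf l \<phi> (R v k)) [0..<2 * (deg E ends v div 2)]"
    by (rule concat_pairs)
  finally show ?thesis unfolding d .
qed

definition cn :: "'e \<Rightarrow> 'e" where "cn = circ_next E \<omega> kin kout"

lemma cn_prop: assumes e: "e \<in> E"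
  shows "cn e \<in> E \<and> fst (\<omega> (cn e)) = snd (\<omega> e) \<and> kout (cn e) = kin e + 1"
proof -
  have v: "snd (\<omega> e) \<in> V" using ends_in[OF e] by blast
  have kr: "odd (kin e)" "kin e \<le> deg E ends (snd (\<omega> e)) - 1" using kin_range[OF e] by auto
  have "0 < kin e" using kr(1) odd_pos by blast
  then have "even (kin e + 1)" "2 \<le> kin e + 1" "kin e + 1 \<le> deg E ends (snd (\<omega> e))"
    using kr by auto
  from out_arc_prop[OF v this] show ?thesis unfolding cn_def circ_next_def by simp
qed

definition rc :: "'e \<Rightarrow> 'e" where "rc = restrict_id cn E"

lemma rc_perm: "rc permutes E"
proof -
  have inj: "inj_on cn E"
  proof
    fix e1 e2 assume e1: "e1 \<in> E" and e2: "e2 \<in> E" and eq: "cn e1 = cn e2"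
    have "snd (\<omega> e1) = snd (\<omega> e2)" "kin e1 = kin e2" using cn_prop[OF e1] cn_prop[OF e2] eq by auto
    then show "e1 = e2" using in_arc_kin[OF e1] in_arc_kin[OF e2] by metis
  qed
  have sub: "cn ` E \<subseteq> E" using cn_prop by blast
  have "cn ` E = E" using endo_inj_surj[OF finE sub inj] .
  then have "bij_betw cn E E" using inj by (simp add: bij_betw_def)
  then show ?thesis unfolding rc_def by (rule permutes_restrict_id)
qed

lemma nc_sign: "(-1::int) ^ num_circuits E \<omega> kin kout = (-1) ^ card E * sign rc"
proof -
  have pw: "(cn^^n) e = (rc^^n) e" if "e \<in> E" for e n
  proof (induction n)
    case (Suc n)
    have "(rc^^n) e \<in> E" using permutes_in_image[OF rc_perm] that
      by (induction n) auto
    then show ?case using Suc unfolding rc_def by simp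
  qed simp
  have "num_circuits E \<omega> kin kout = card (orbs rc E)"
    unfolding num_circuits_def orbs_def cn_def[symmetric] using pw by (intro arg_cong[of _ _ card] image_cong) auto
  then show ?thesis using orbs_sign[OF finE rc_perm] by simp
qed

end

definition flipS :: "'e set \<Rightarrow> 'e \<times> bool \<Rightarrow> 'e \<times> bool" where
  "flipS D x = (fst x, if fst x \<in> D then \<not> snd x else snd x)"

definition partner :: "nat \<Rightarrow> nat \<Rightarrow> nat" where
  "partner l a = (if a \<le> l then a + l else a - l)"

lemma ebasis_vecs: "1 \<le> a \<Longrightarrow> a \<le> 2*l \<Longrightarrow> ebasis a \<in> vecs l"
  unfolding vecs_def ebasis_def by auto

lemma fbasis_vecs: "1 \<le> a \<Longrightarrow> a \<le> 2*l \<Longrightarrow> fbasis l a \<in> vecs l"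
  unfolding vecs_def ebasis_def fbasis_def by auto

lemma vf_vecs: "\<phi> \<in> PiE E (\<lambda>_. {1..2*l}) \<Longrightarrow> fst x \<in> E \<Longrightarrow> vf l \<phi> x \<in> vecs l"
  unfolding vf_def using ebasis_vecs fbasis_vecs by (auto simp: PiE_iff)

lemma partner_in: "a \<in> {1..2*l} \<Longrightarrow> partner l a \<in> {1..2*l}"
  unfolding partner_def by auto

lemma partner_partner: "a \<in> {1..2*l} \<Longrightarrow> partner l (partner l a) = a"
  unfolding partner_def by auto

lemma vf_step:
  assumes a: "\<phi> ee \<in> {1..2*l}" and nD: "ee \<notin> D"
  defines "z \<equiv> (ee, l < \<phi> ee)"
  shows "vf l (\<phi>(ee := partner l (\<phi> ee))) (flipS (insert ee D) x) =
         (if x = z then (\<lambda>j. - vf l \<phi> (flipS D x) j) else vf l \<phi> (flipS D x))"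
proof (cases "fst x = ee")
  case False
  then show ?thesis unfolding z_def vf_def flipS_def by (auto)
next
  case True
  obtain b where x: "x = (ee, b)" using True by (cases x) auto
  have f1: "flipS (insert ee D) x = (ee, \<not> b)" unfolding x flipS_def by simp
  have f2: "flipS D x = (ee, b)" unfolding x flipS_def using nD by simp
  show ?thesis unfolding f1 f2 using a
    by (cases b; cases "\<phi> ee \<le> l") (auto simp: z_def x vf_def partner_def fbasis_def ebasis_def fun_eq_iff)
qed

context cfg
begin

lemma stage_step:
  assumes ext: "ext_dual l h" and e0: "e0 \<in> E" and nD: "e0 \<notin> D" and D: "D \<subseteq> E"
    and phi: "\<phi> \<in> PiE E (\<lambda>_. {1..2*l})"
  shows "(\<Prod>v\<in>V. h (deg E ends v) (map (\<lambda>k. vf l (\<phi>(e0 := partner l (\<phi> e0))) (flipS (insert e0 D) (R v k))) [0..<deg E ends v]))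
       = - (\<Prod>v\<in>V. h (deg E ends v) (map (\<lambda>k. vf l \<phi> (flipS D (R v k))) [0..<deg E ends v]))"
proof -
  define \<psi> where "\<psi> = \<phi>(e0 := partner l (\<phi> e0))"
  define z where "z = (e0, l < \<phi> e0)"
  have a: "\<phi> e0 \<in> {1..2*l}" using phi e0 by (auto simp: PiE_iff)
  have vs: "vf l \<psi> (flipS (insert e0 D) x) = (if x = z then (\<lambda>j. - vf l \<phi> (flipS D x) j) else vf l \<phi> (flipS D x))" for x
    unfolding \<psi>_def z_def by (rule vf_step[where \<phi>=\<phi> and ee=e0 and l=l, OF a nD])
  define v0 where "v0 = (if l < \<phi> e0 then snd (\<omega> e0) else fst (\<omega> e0))"
  have v0: "v0 \<in> V" using ends_in[OF e0] unfolding v0_def by auto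
  have zK: "z \<in> Kset v0" unfolding z_def v0_def Kset_def using e0 by auto
  have zK': "z \<notin> Kset v" if "v \<noteq> v0" for v using that unfolding z_def v0_def Kset_def by auto
  define L where "L v = map (\<lambda>k. vf l \<phi> (flipS D (R v k))) [0..<deg E ends v]" for v
  define L' where "L' v = map (\<lambda>k. vf l \<psi> (flipS (insert e0 D) (R v k))) [0..<deg E ends v]" for v
  have other: "L' v = L v" if v: "v \<in> V" "v \<noteq> v0" for v
    unfolding L_def L'_def
  proof (rule map_cong[OF refl])
    fix k assume "k \<in> set [0..<deg E ends v]"
    then have "R v k \<in> Kset v" using R_in[OF v(1)] by simp
    then have "R v k \<noteq> z" using zK'[OF v(2)] by blast
    then show "vf l \<psi> (flipS (insert e0 D) (R v k)) = vf l \<phi> (flipS D (R v k))" using vs by simp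
  qed
  obtain k0 where k0: "k0 < deg E ends v0" "R v0 k0 = z" using R_surj[OF v0 zK] by blast
  have lenL: "length (L v0) = deg E ends v0" unfolding L_def by simp
  have setL: "set (L v0) \<subseteq> vecs l"
  proof
    fix y assume "y \<in> set (L v0)"
    then obtain k where k: "k < deg E ends v0" "y = vf l \<phi> (flipS D (R v0 k))" unfolding L_def by auto
    have "R v0 k \<in> Kset v0" using R_in[OF v0 k(1)] .
    then have "fst (flipS D (R v0 k)) \<in> E" unfolding Kset_def flipS_def by simp
    then show "y \<in> vecs l" using vf_vecs[OF phi] k(2) by simp
  qed
  have mid: "L' v0 = (L v0)[k0 := (\<lambda>j. - (L v0 ! k0) j)]"
  proof (rule nth_equalityI)
    show "length (L' v0) = length ((L v0)[k0 := (\<lambda>j. - (L v0 ! k0) j)])" unfolding L_def L'_def by simp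
  next
    fix k assume "k < length (L' v0)"
    then have k: "k < deg E ends v0" unfolding L'_def by simp
    show "L' v0 ! k = (L v0)[k0 := (\<lambda>j. - (L v0 ! k0) j)] ! k"
    proof (cases "k = k0")
      case True
      then show ?thesis using k k0 vs[of z] unfolding L_def L'_def by simp
    next
      case False
      then have "R v0 k \<noteq> z" using k0 k R_inj[OF v0] unfolding inj_on_def by auto
      then show ?thesis using False k vs[of "R v0 k"] unfolding L_def L'_def by simp
    qed
  qed
  have hv0: "h (deg E ends v0) (L' v0) = - h (deg E ends v0) (L v0)"
    unfolding mid by (rule hom_neg[OF ext lenL setL k0(1)])
  have "(\<Prod>v\<in>V. h (deg E ends v) (L' v)) = h (deg E ends v0) (L' v0) * (\<Prod>v\<in>V-{v0}. h (deg E ends v) (L' v))"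
    using prod.remove[OF finV v0] .
  also have "(\<Prod>v\<in>V-{v0}. h (deg E ends v) (L' v)) = (\<Prod>v\<in>V-{v0}. h (deg E ends v) (L v))"
    using other by (intro prod.cong) auto
  also have "h (deg E ends v0) (L' v0) * (\<Prod>v\<in>V-{v0}. h (deg E ends v) (L v)) =
      - (h (deg E ends v0) (L v0) * (\<Prod>v\<in>V-{v0}. h (deg E ends v) (L v)))" using hv0 by simp
  also have "h (deg E ends v0) (L v0) * (\<Prod>v\<in>V-{v0}. h (deg E ends v) (L v)) = (\<Prod>v\<in>V. h (deg E ends v) (L v))"
    by (rule prod.remove[OF finV v0, symmetric])
  finally show ?thesis unfolding L_def L'_def \<psi>_def .
qed

lemma stageB:
  assumes ext: "ext_dual l h" and D: "D \<subseteq> E"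
  shows "(\<Sum>\<phi>\<in>PiE E (\<lambda>_. {1..2*l}). \<Prod>v\<in>V. h (deg E ends v) (map (\<lambda>k. vf l \<phi> (flipS D (R v k))) [0..<deg E ends v]))
       = (-1)^card D * (\<Sum>\<phi>\<in>PiE E (\<lambda>_. {1..2*l}). \<Prod>v\<in>V. h (deg E ends v) (map (\<lambda>k. vf l \<phi> (R v k)) [0..<deg E ends v]))"
proof -
  have fD: "finite D" using D finE finite_subset by blast
  show ?thesis using fD D
  proof (induction D rule: finite_induct)
    case empty
    have fl: "flipS {} = (\<lambda>x. x)" unfolding flipS_def by auto
    show ?case unfolding fl by simp
  next
    case (insert e0 D)
    define G where "G D' \<phi> = (\<Prod>v\<in>V. h (deg E ends v) (map (\<lambda>k. vf l \<phi> (flipS D' (R v k))) [0..<deg E ends v]))" for D' \<phi>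
    define \<Psi> where "\<Psi> \<phi> = \<phi>(e0 := partner l (\<phi> e0))" for \<phi> :: "'e \<Rightarrow> nat"
    let ?P = "PiE E (\<lambda>_. {1..2*l})"
    have e0: "e0 \<in> E" and DE: "D \<subseteq> E" using insert.prems by auto
    have inP: "\<Psi> \<phi> \<in> ?P" if "\<phi> \<in> ?P" for \<phi>
      unfolding \<Psi>_def using that e0 partner_in by (auto simp: PiE_iff extensional_def)
    have inv: "\<Psi> (\<Psi> \<phi>) = \<phi>" if "\<phi> \<in> ?P" for \<phi>
      unfolding \<Psi>_def using that e0 partner_partner by (auto simp: PiE_iff fun_eq_iff)
    have "(\<Sum>\<phi>\<in>?P. G (insert e0 D) \<phi>) = (\<Sum>\<phi>\<in>?P. G (insert e0 D) (\<Psi> \<phi>))"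
      by (rule sum.reindex_bij_witness[of _ \<Psi> \<Psi>]) (use inP inv in auto)
    also have "\<dots> = (\<Sum>\<phi>\<in>?P. - G D \<phi>)"
      unfolding G_def \<Psi>_def by (rule sum.cong[OF refl], rule stage_step[OF ext e0 insert.hyps(2) DE])
    also have "\<dots> = - (\<Sum>\<phi>\<in>?P. G D \<phi>)" by (simp add: sum_negf)
    finally have st: "(\<Sum>\<phi>\<in>?P. G (insert e0 D) \<phi>) = - (\<Sum>\<phi>\<in>?P. G D \<phi>)" .
    have IH: "(\<Sum>\<phi>\<in>?P. G D \<phi>) = (-1)^card D * (\<Sum>\<phi>\<in>?P. \<Prod>v\<in>V. h (deg E ends v) (map (\<lambda>k. vf l \<phi> (R v k)) [0..<deg E ends v]))"
      unfolding G_def using insert.IH DE by blast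
    show ?case using st IH insert.hyps unfolding G_def by simp
  qed
qed

end

lemma block_sign:
  assumes "finite W" "\<forall>v\<in>W. finite (K v)" "\<forall>v\<in>W. \<forall>w\<in>W. v \<noteq> w \<longrightarrow> K v \<inter> K w = {}"
    "\<forall>v\<in>W. restrict_id \<sigma> (K v) permutes K v"
  shows "restrict_id \<sigma> (\<Union>v\<in>W. K v) permutes (\<Union>v\<in>W. K v) \<and>
         sign (restrict_id \<sigma> (\<Union>v\<in>W. K v)) = (\<Prod>v\<in>W. sign (restrict_id \<sigma> (K v)))"
  using assms
proof (induction W rule: finite_induct)
  case empty
  have u: "(\<Union>v\<in>{}. K v) = {}" by simp
  have e: "restrict_id \<sigma> {} = id" by (auto simp: fun_eq_iff restrict_id_def id_def)
  have "id permutes {}" by (rule permutes_id)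
  moreover have "sign id = (\<Prod>v\<in>{}. sign (restrict_id \<sigma> (K v)))" by (simp only: sign_id prod.empty)
  ultimately show ?case unfolding u e by blast
next
  case (insert w W)
  define U where "U = (\<Union>v\<in>W. K v)"
  have IH: "restrict_id \<sigma> U permutes U \<and> sign (restrict_id \<sigma> U) = (\<Prod>v\<in>W. sign (restrict_id \<sigma> (K v)))"
    unfolding U_def using insert.IH insert.prems by blast
  have pU: "restrict_id \<sigma> U permutes U" using IH by blast
  have pw: "restrict_id \<sigma> (K w) permutes K w" using insert.prems by blast
  have disj: "K w \<inter> U = {}"
  proof -
    have "K w \<inter> K v = {}" if v: "v \<in> W" for v
    proof -
      have "v \<noteq> w" using v insert.hyps by auto
      moreover have "w \<in> insert w W" "v \<in> insert w W" using v by auto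
      ultimately show ?thesis using insert.prems(2) by metis
    qed
    then show ?thesis unfolding U_def by blast
  qed
  have finU: "finite U" unfolding U_def using insert.prems insert.hyps by blast
  have finw: "finite (K w)" using insert.prems by blast
  have un: "(\<Union>v\<in>insert w W. K v) = K w \<union> U" unfolding U_def by blast
  have comp: "restrict_id \<sigma> (K w \<union> U) = restrict_id \<sigma> (K w) \<circ> restrict_id \<sigma> U"
  proof
    fix x
    show "restrict_id \<sigma> (K w \<union> U) x = (restrict_id \<sigma> (K w) \<circ> restrict_id \<sigma> U) x"
    proof (cases "x \<in> U")
      case True
      have "restrict_id \<sigma> U x \<in> U" using permutes_in_image[OF pU, of x] True by blast
      then have "\<sigma> x \<in> U" using True by simp
      then have "\<sigma> x \<notin> K w" using disj by blast
      then show ?thesis using True by simp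
    next
      case False
      then show ?thesis by (simp add: restrict_id_def)
    qed
  qed
  have p1: "restrict_id \<sigma> (K w) permutes (K w \<union> U)" by (rule permutes_subset[OF pw]) auto
  have p2: "restrict_id \<sigma> U permutes (K w \<union> U)" by (rule permutes_subset[OF pU]) auto
  have perm: "restrict_id \<sigma> (K w \<union> U) permutes (K w \<union> U)"
    unfolding comp by (rule permutes_compose[OF p2 p1])
  have fin: "finite (K w \<union> U)" using finU finw by simp
  have sg: "sign (restrict_id \<sigma> (K w \<union> U)) = sign (restrict_id \<sigma> (K w)) * sign (restrict_id \<sigma> U)"
    unfolding comp
    by (rule sign_compose) (meson p1 p2 fin permutation_permutes)+
  show ?case unfolding un using perm sg IH insert.hyps by simp
qed

lemma flip_insert: "e \<notin> D \<Longrightarrow> flipS (insert e D) = Transposition.transpose (e, True) (e, False) \<circ> flipS D"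
  by (auto simp: fun_eq_iff flipS_def Transposition.transpose_def)

lemma sign_flip:
  assumes "finite D"
  shows "flipS D permutes (D \<times> UNIV) \<and> sign (flipS D) = (-1)^card D"
  using assms
proof (induction D rule: finite_induct)
  case empty
  have e: "flipS {} = id" by (auto simp: fun_eq_iff flipS_def id_def)
  have "id permutes ({} \<times> UNIV)" by (rule permutes_id)
  moreover have "sign id = (-1::int)^card {}" by (simp only: sign_id card.empty power_0)
  ultimately show ?case unfolding e by blast
next
  case (insert e D)
  have p0: "flipS D permutes (D \<times> UNIV)" using insert.IH by blast
  have p1: "flipS D permutes (insert e D \<times> UNIV)" by (rule permutes_subset[OF p0]) auto
  have p2: "Transposition.transpose (e, True) (e, False) permutes (insert e D \<times> UNIV)"
    by (rule permutes_swap_id) auto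
  have fin: "finite (insert e D \<times> (UNIV :: bool set))" using insert.hyps by simp
  have "sign (flipS (insert e D)) = sign (Transposition.transpose (e, True) (e, False)) * sign (flipS D)"
    unfolding flip_insert[OF insert.hyps(2)]
    by (rule sign_compose) (meson p1 p2 fin permutation_permutes)+
  then have "sign (flipS (insert e D)) = - sign (flipS D)" by (simp add: sign_swap_id)
  moreover have "flipS (insert e D) permutes (insert e D \<times> UNIV)"
    unfolding flip_insert[OF insert.hyps(2)] by (rule permutes_compose[OF p1 p2])
  ultimately show ?case using insert.IH insert.hyps by simp
qed

lemma lift_sign:
  fixes c :: 'b
  assumes fin: "finite E" and A: "A permutes E"
  shows "(\<lambda>x. if snd x = c \<and> fst x \<in> E then (A (fst x), c) else x) permutes (E \<times> {c}) \<and>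
     sign (\<lambda>x. if snd x = c \<and> fst x \<in> E then (A (fst x), c) else x) = sign A"
proof -
  define L where "L = (\<lambda>x. if snd x = c \<and> fst x \<in> E then (A (fst x), c) else x)"
  define f where "f = (\<lambda>e::'a. (e, c))"
  have inj: "inj_on f E" unfolding f_def by (auto simp: inj_on_def)
  have bij: "bij_betw f E (E \<times> {c})" unfolding f_def by (auto simp: bij_betw_def inj_on_def)
  have eq: "map_permutation E f A = L"
  proof
    fix x
    show "map_permutation E f A x = L x"
    proof (cases "snd x = c \<and> fst x \<in> E")
      case True
      then have x: "x = f (fst x)" "fst x \<in> E" unfolding f_def by (cases x; auto)+
      have "inv_into E f x = fst x" using inv_into_f_f[OF inj x(2)] x(1) by metis
      then show ?thesis using True x unfolding map_permutation_def L_def f_def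
        by (auto simp: restrict_id_def)
    next
      case False
      then have "x \<notin> f ` E" unfolding f_def by auto
      then show ?thesis using False unfolding map_permutation_def L_def by auto
    qed
  qed
  show ?thesis
    using map_permutation_permutes[OF bij A] sign_map_permutation[OF inj A fin] unfolding eq L_def by simp
qed

lemma sign_alg: "(b::int) * c2 = c1 * a \<Longrightarrow> c2 * c2 = 1 \<Longrightarrow> a * a = 1 \<Longrightarrow> a * b = c1 * c2"
proof -
  assume h1: "b * c2 = c1 * a" and h2: "c2 * c2 = 1" and h3: "a * a = 1"
  have "a * b = a * b * (c2 * c2)" using h2 by simp
  also have "\<dots> = a * (b * c2) * c2" by (simp add: mult.assoc)
  also have "\<dots> = (a * a) * c1 * c2" using h1 by (simp add: algebra_simps)
  also have "\<dots> = c1 * c2" using h3 by simp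
  finally show ?thesis .
qed

locale two = c1: cfg V E ends \<omega>1 kin1 kout1 + c2: cfg V E ends \<omega>2 kin2 kout2
  for V :: "'v set" and E :: "'e set" and ends :: "'e \<Rightarrow> 'v \<times> 'v"
    and \<omega>1 :: "'e \<Rightarrow> 'v \<times> 'v" and kin1 kout1 :: "'e \<Rightarrow> nat"
    and \<omega>2 :: "'e \<Rightarrow> 'v \<times> 'v" and kin2 kout2 :: "'e \<Rightarrow> nat"
begin

definition D :: "'e set" where "D = {e\<in>E. \<omega>1 e \<noteq> \<omega>2 e}"

lemma DE: "D \<subseteq> E" unfolding D_def by blast
lemma finD: "finite D" using DE c1.finE finite_subset by blast

lemma or1: "e \<in> E \<Longrightarrow> \<omega>1 e = ends e \<or> \<omega>1 e = prod.swap (ends e)"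
  using c1.eo unfolding eulerian_orientation_def orientation_def by blast
lemma or2: "e \<in> E \<Longrightarrow> \<omega>2 e = ends e \<or> \<omega>2 e = prod.swap (ends e)"
  using c2.eo unfolding eulerian_orientation_def orientation_def by blast

lemma D_sw: assumes "e \<in> D" shows "snd (\<omega>1 e) = fst (\<omega>2 e) \<and> fst (\<omega>1 e) = snd (\<omega>2 e)"
proof -
  have e: "e \<in> E" "\<omega>1 e \<noteq> \<omega>2 e" using assms unfolding D_def by auto
  show ?thesis using or1[OF e(1)] or2[OF e(1)] e(2) by (cases "ends e") auto
qed

lemma nD: "e \<in> E \<Longrightarrow> e \<notin> D \<Longrightarrow> \<omega>1 e = \<omega>2 e" unfolding D_def by blast

definition Ap :: "'e \<Rightarrow> 'e" where "Ap e = in_arc E \<omega>1 kin1 (snd (\<omega>2 e)) (kin2 e)"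
definition Bp :: "'e \<Rightarrow> 'e" where "Bp e = out_arc E \<omega>1 kout1 (fst (\<omega>2 e)) (kout2 e)"

lemma Ap_prop: assumes e: "e \<in> E"
  shows "Ap e \<in> E \<and> snd (\<omega>1 (Ap e)) = snd (\<omega>2 e) \<and> kin1 (Ap e) = kin2 e"
proof -
  have v: "snd (\<omega>2 e) \<in> V" using c2.ends_in[OF e] by blast
  have kr: "odd (kin2 e)" "kin2 e \<le> deg E ends (snd (\<omega>2 e)) - 1" using c2.kin_range[OF e] by auto
  show ?thesis using c1.in_arc_prop[OF v kr] unfolding Ap_def by blast
qed

lemma Bp_prop: assumes e: "e \<in> E"
  shows "Bp e \<in> E \<and> fst (\<omega>1 (Bp e)) = fst (\<omega>2 e) \<and> kout1 (Bp e) = kout2 e"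
proof -
  have v: "fst (\<omega>2 e) \<in> V" using c2.ends_in[OF e] by blast
  have kr: "even (kout2 e)" "2 \<le> kout2 e" "kout2 e \<le> deg E ends (fst (\<omega>2 e))" using c2.kout_range[OF e] by auto
  show ?thesis using c1.out_arc_prop[OF v kr] unfolding Bp_def by blast
qed

lemma Ap_perm: "restrict_id Ap E permutes E"
proof -
  have inj: "inj_on Ap E"
  proof
    fix e1 e2 assume e1: "e1 \<in> E" and e2: "e2 \<in> E" and eq: "Ap e1 = Ap e2"
    have "snd (\<omega>2 e1) = snd (\<omega>2 e2)" "kin2 e1 = kin2 e2" using Ap_prop[OF e1] Ap_prop[OF e2] eq by auto
    then show "e1 = e2" using c2.in_arc_kin[OF e1] c2.in_arc_kin[OF e2] by metis
  qed
  have sub: "Ap ` E \<subseteq> E" using Ap_prop by blast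
  have "Ap ` E = E" using endo_inj_surj[OF c1.finE sub inj] .
  then have "bij_betw Ap E E" using inj by (simp add: bij_betw_def)
  then show ?thesis by (rule permutes_restrict_id)
qed

lemma Bp_perm: "restrict_id Bp E permutes E"
proof -
  have inj: "inj_on Bp E"
  proof
    fix e1 e2 assume e1: "e1 \<in> E" and e2: "e2 \<in> E" and eq: "Bp e1 = Bp e2"
    have "fst (\<omega>2 e1) = fst (\<omega>2 e2)" "kout2 e1 = kout2 e2" using Bp_prop[OF e1] Bp_prop[OF e2] eq by auto
    then show "e1 = e2" using c2.out_arc_kout[OF e1] c2.out_arc_kout[OF e2] by metis
  qed
  have sub: "Bp ` E \<subseteq> E" using Bp_prop by blast
  have "Bp ` E = E" using endo_inj_surj[OF c1.finE sub inj] .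
  then have "bij_betw Bp E E" using inj by (simp add: bij_betw_def)
  then show ?thesis by (rule permutes_restrict_id)
qed

definition Lm :: "'e \<times> bool \<Rightarrow> 'e \<times> bool" where
  "Lm x = (if fst x \<in> E then (if snd x then (Ap (fst x), True) else (Bp (fst x), False)) else x)"

definition sg :: "'e \<times> bool \<Rightarrow> 'e \<times> bool" where "sg x = flipS D (Lm x)"

lemma flip_flip: "flipS D (flipS D x) = x" unfolding flipS_def by (cases x) auto

lemma R_rel: assumes v: "v \<in> V" and k: "k < deg E ends v" shows "c1.R v k = Lm (c2.R v k)"
proof (cases "even k")
  case True
  have "k + 1 \<noteq> deg E ends v"
  proof
    assume "k + 1 = deg E ends v"
    then have "even (k+1)" using c1.deg_even[OF v] by simp
    then show False using True by simp
  qed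
  then have kk: "k + 1 \<le> deg E ends v - 1" using k by simp
  have o: "odd (k+1)" using True by simp
  note p = c2.in_arc_prop[OF v o kk]
  define e where "e = in_arc E \<omega>2 kin2 v (k+1)"
  have "Ap e = in_arc E \<omega>1 kin1 v (k+1)" unfolding Ap_def e_def using p by simp
  then show ?thesis using True p unfolding c1.R_def c2.R_def Lm_def e_def by simp
next
  case False
  have "0 < k" using False odd_pos by blast
  then have kk: "even (k+1)" "2 \<le> k+1" "k+1 \<le> deg E ends v" using False k by auto
  note p = c2.out_arc_prop[OF v kk]
  define e where "e = out_arc E \<omega>2 kout2 v (k+1)"
  have "Bp e = out_arc E \<omega>1 kout1 v (k+1)" unfolding Bp_def e_def using p by simp
  then show ?thesis using False p unfolding c1.R_def c2.R_def Lm_def e_def by simp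
qed

lemma flipK: assumes "x \<in> c1.Kset v" shows "flipS D x \<in> c2.Kset v"
proof -
  obtain e b where x: "x = (e, b)" by (cases x)
  have e: "e \<in> E" using assms x unfolding c1.Kset_def by simp
  show ?thesis
  proof (cases "e \<in> D")
    case True
    then show ?thesis using assms D_sw[OF True] e unfolding x c1.Kset_def c2.Kset_def flipS_def by auto
  next
    case False
    then show ?thesis using assms nD[OF e False] e unfolding x c1.Kset_def c2.Kset_def flipS_def by auto
  qed
qed

lemma sg_R: "v \<in> V \<Longrightarrow> k < deg E ends v \<Longrightarrow> sg (c2.R v k) = flipS D (c1.R v k)"
  unfolding sg_def using R_rel by simp

lemma sg_bij: assumes v: "v \<in> V" shows "bij_betw sg (c2.Kset v) (c2.Kset v)"
proof -
  have sub: "sg ` c2.Kset v \<subseteq> c2.Kset v"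
  proof
    fix y assume "y \<in> sg ` c2.Kset v"
    then obtain x where x: "x \<in> c2.Kset v" "y = sg x" by blast
    obtain k where k: "k < deg E ends v" "c2.R v k = x" using c2.R_surj[OF v x(1)] by blast
    have "y = flipS D (c1.R v k)" using sg_R[OF v k(1)] k(2) x(2) by simp
    then show "y \<in> c2.Kset v" using flipK c1.R_in[OF v k(1)] by simp
  qed
  have inj: "inj_on sg (c2.Kset v)"
  proof
    fix x1 x2 assume x1: "x1 \<in> c2.Kset v" and x2: "x2 \<in> c2.Kset v" and eq: "sg x1 = sg x2"
    obtain k1 where k1: "k1 < deg E ends v" "c2.R v k1 = x1" using c2.R_surj[OF v x1] by blast
    obtain k2 where k2: "k2 < deg E ends v" "c2.R v k2 = x2" using c2.R_surj[OF v x2] by blast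
    have "flipS D (c1.R v k1) = flipS D (c1.R v k2)" using eq sg_R[OF v k1(1)] sg_R[OF v k2(1)] k1 k2 by simp
    then have "flipS D (flipS D (c1.R v k1)) = flipS D (flipS D (c1.R v k2))" by simp
    then have "c1.R v k1 = c1.R v k2" unfolding flip_flip .
    then have "k1 = k2" using c1.R_inj[OF v] k1(1) k2(1) unfolding inj_on_def by blast
    then show "x1 = x2" using k1 k2 by simp
  qed
  have "sg ` c2.Kset v = c2.Kset v" using endo_inj_surj[OF c2.Kset_fin sub inj] .
  then show ?thesis using inj by (simp add: bij_betw_def)
qed

lemma sgv_perm: "v \<in> V \<Longrightarrow> restrict_id sg (c2.Kset v) permutes c2.Kset v"
  using sg_bij permutes_restrict_id by blast

lemma vertex_alt:
  assumes ext: "ext_dual l h" and v: "v \<in> V" and phi: "\<phi> \<in> PiE E (\<lambda>_. {1..2*l})"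
  shows "h (deg E ends v) (map (\<lambda>k. vf l \<phi> (c1.R v k)) [0..<deg E ends v]) =
    of_int (sign (restrict_id sg (c2.Kset v))) * h (deg E ends v) (map (\<lambda>k. vf l \<phi> (flipS D (c2.R v k))) [0..<deg E ends v])"
proof -
  have F: "\<forall>x\<in>c2.Kset v. vf l \<phi> (flipS D x) \<in> vecs l"
  proof
    fix x assume "x \<in> c2.Kset v"
    then have "fst (flipS D x) \<in> E" unfolding c2.Kset_def flipS_def by simp
    then show "vf l \<phi> (flipS D x) \<in> vecs l" by (rule vf_vecs[OF phi])
  qed
  note A = alt[OF ext c2.Kset_fin sgv_perm[OF v] c2.R_bij[OF v], of "\<lambda>x. vf l \<phi> (flipS D x)", OF F]
  have M: "map (\<lambda>k. vf l \<phi> (c1.R v k)) [0..<deg E ends v] =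
        map (\<lambda>k. vf l \<phi> (flipS D (restrict_id sg (c2.Kset v) (c2.R v k)))) [0..<deg E ends v]"
  proof (rule map_cong[OF refl])
    fix k assume "k \<in> set [0..<deg E ends v]"
    then have k: "k < deg E ends v" by simp
    have "c2.R v k \<in> c2.Kset v" by (rule c2.R_in[OF v k])
    then have "restrict_id sg (c2.Kset v) (c2.R v k) = flipS D (c1.R v k)" using sg_R[OF v k] by simp
    then show "vf l \<phi> (c1.R v k) = vf l \<phi> (flipS D (restrict_id sg (c2.Kset v) (c2.R v k)))"
      by (simp add: flip_flip)
  qed
  show ?thesis unfolding M by (rule A)
qed

lemma sign_sg_blocks: "sign sg = (\<Prod>v\<in>V. sign (restrict_id sg (c2.Kset v)))"
proof -
  have disj: "\<forall>v\<in>V. \<forall>w\<in>V. v \<noteq> w \<longrightarrow> c2.Kset v \<inter> c2.Kset w = {}"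
    unfolding c2.Kset_def by auto
  have fin: "\<forall>v\<in>V. finite (c2.Kset v)" using c2.Kset_fin by blast
  have pv: "\<forall>v\<in>V. restrict_id sg (c2.Kset v) permutes c2.Kset v" using sgv_perm by blast
  note B = block_sign[OF c1.finV fin disj pv]
  have un: "(\<Union>v\<in>V. c2.Kset v) = E \<times> UNIV"
  proof
    show "(\<Union>v\<in>V. c2.Kset v) \<subseteq> E \<times> UNIV" unfolding c2.Kset_def by auto
    show "E \<times> UNIV \<subseteq> (\<Union>v\<in>V. c2.Kset v)"
    proof
      fix x assume x: "x \<in> E \<times> (UNIV :: bool set)"
      obtain e b where xe: "x = (e, b)" by (cases x)
      have e: "e \<in> E" using x xe by simp
      show "x \<in> (\<Union>v\<in>V. c2.Kset v)"
      proof (cases b)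
        case True
        then have "x \<in> c2.Kset (snd (\<omega>2 e))" unfolding xe c2.Kset_def using e by simp
        then show ?thesis using c2.ends_in[OF e] by blast
      next
        case False
        then have "x \<in> c2.Kset (fst (\<omega>2 e))" unfolding xe c2.Kset_def using e by simp
        then show ?thesis using c2.ends_in[OF e] by blast
      qed
    qed
  qed
  have rs: "restrict_id sg (E \<times> UNIV) = sg"
  proof
    fix x
    show "restrict_id sg (E \<times> UNIV) x = sg x"
    proof (cases "fst x \<in> E")
      case True then show ?thesis by (cases x) simp
    next
      case False
      then have "fst x \<notin> D" using DE by blast
      then have "sg x = x" using False unfolding sg_def Lm_def flipS_def by (cases x) simp
      then show ?thesis using False by (cases x) simp
    qed
  qed
  show ?thesis using B unfolding un rs by blast
qed

lemma sign_sg_parts: "sign sg = (-1)^card D * sign (restrict_id Ap E) * sign (restrict_id Bp E)"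
proof -
  define LT where "LT = (\<lambda>x. if snd x = True \<and> fst x \<in> E then (restrict_id Ap E (fst x), True) else x)"
  define LF where "LF = (\<lambda>x. if snd x = False \<and> fst x \<in> E then (restrict_id Bp E (fst x), False) else x)"
  have T: "LT permutes (E \<times> {True}) \<and> sign LT = sign (restrict_id Ap E)"
    unfolding LT_def by (rule lift_sign[OF c1.finE Ap_perm])
  have F: "LF permutes (E \<times> {False}) \<and> sign LF = sign (restrict_id Bp E)"
    unfolding LF_def by (rule lift_sign[OF c1.finE Bp_perm])
  have Fl: "flipS D permutes (D \<times> UNIV) \<and> sign (flipS D) = (-1)^card D" by (rule sign_flip[OF finD])
  have f1: "finite (E \<times> {True})" "finite (E \<times> {False})" "finite (D \<times> (UNIV :: bool set))"
    using c1.finE finD by simp_all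
  have pT: "permutation LT" unfolding permutation_permutes using T f1(1) by blast
  have pF: "permutation LF" unfolding permutation_permutes using F f1(2) by blast
  have pFl: "permutation (flipS D)" unfolding permutation_permutes using Fl f1(3) by blast
  have eq: "sg = flipS D \<circ> (LT \<circ> LF)"
  proof
    fix x :: "'e \<times> bool"
    obtain e b where x: "x = (e, b)" by (cases x)
    show "sg x = (flipS D \<circ> (LT \<circ> LF)) x"
      unfolding sg_def Lm_def LT_def LF_def x by (cases b) auto
  qed
  have "sign sg = sign (flipS D) * (sign LT * sign LF)"
    unfolding eq using sign_compose[OF pT pF] sign_compose[OF pFl permutation_compose[OF pT pF]] by simp
  then show ?thesis using T F Fl by simp
qed

lemma circ_id: "restrict_id Bp E \<circ> c2.rc = c1.rc \<circ> restrict_id Ap E"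
proof
  fix x
  show "(restrict_id Bp E \<circ> c2.rc) x = (c1.rc \<circ> restrict_id Ap E) x"
  proof (cases "x \<in> E")
    case True
    note cp = c2.cn_prop[OF True]
    note ap = Ap_prop[OF True]
    have l: "(restrict_id Bp E \<circ> c2.rc) x = Bp (c2.cn x)" unfolding c2.rc_def using True cp by simp
    have r: "(c1.rc \<circ> restrict_id Ap E) x = c1.cn (Ap x)" unfolding c1.rc_def using True ap by simp
    have "Bp (c2.cn x) = out_arc E \<omega>1 kout1 (snd (\<omega>2 x)) (kin2 x + 1)" unfolding Bp_def using cp by simp
    also have "\<dots> = c1.cn (Ap x)" unfolding c1.cn_def circ_next_def using ap by simp
    finally show ?thesis using l r by simp
  next
    case False
    then show ?thesis unfolding c1.rc_def c2.rc_def by simp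
  qed
qed

lemma signs_rel: "sign (restrict_id Ap E) * sign (restrict_id Bp E) = sign c1.rc * sign c2.rc"
proof -
  have pA: "permutation (restrict_id Ap E)" unfolding permutation_permutes using Ap_perm c1.finE by blast
  have pB: "permutation (restrict_id Bp E)" unfolding permutation_permutes using Bp_perm c1.finE by blast
  have p1: "permutation c1.rc" unfolding permutation_permutes using c1.rc_perm c1.finE by blast
  have p2: "permutation c2.rc" unfolding permutation_permutes using c2.rc_perm c1.finE by blast
  have "sign (restrict_id Bp E) * sign c2.rc = sign c1.rc * sign (restrict_id Ap E)"
    using arg_cong[OF circ_id, of sign] sign_compose[OF pB p2] sign_compose[OF p1 pA] by simp
  moreover have "sign c2.rc * sign c2.rc = 1" "sign (restrict_id Ap E) * sign (restrict_id Ap E) = 1" by simp_all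
  ultimately show ?thesis by (rule sign_alg)
qed

end

lemma neg1_sq: "((-1::int)^n) * ((-1)^n) = 1"
  by (simp add: power_mult_distrib[symmetric])

context two
begin

lemma main:
  assumes ext: "ext_dual l h"
  shows "s_h l h V E ends \<omega>1 kin1 kout1 = s_h l h V E ends \<omega>2 kin2 kout2"
proof -
  let ?P = "PiE E (\<lambda>_. {1..2*l})"
  define S2 where "S2 = (\<Sum>\<phi>\<in>?P. \<Prod>v\<in>V. h (deg E ends v) (map (\<lambda>k. vf l \<phi> (c2.R v k)) [0..<deg E ends v]))"
  define S2' where "S2' = (\<Sum>\<phi>\<in>?P. \<Prod>v\<in>V. h (deg E ends v) (map (\<lambda>k. vf l \<phi> (flipS D (c2.R v k))) [0..<deg E ends v]))"
  define r1 where "r1 = sign c1.rc"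
  define r2 where "r2 = sign c2.rc"
  have e1: "(\<Sum>\<phi>\<in>?P. \<Prod>v\<in>V. h (deg E ends v) (vertex_args l E ends \<omega>1 kin1 kout1 \<phi> v)) =
        (\<Sum>\<phi>\<in>?P. \<Prod>v\<in>V. h (deg E ends v) (map (\<lambda>k. vf l \<phi> (c1.R v k)) [0..<deg E ends v]))"
    by (intro sum.cong refl prod.cong) (simp add: c1.vargs)
  have e2: "(\<Sum>\<phi>\<in>?P. \<Prod>v\<in>V. h (deg E ends v) (vertex_args l E ends \<omega>2 kin2 kout2 \<phi> v)) = S2"
    unfolding S2_def by (intro sum.cong refl prod.cong) (simp add: c2.vargs)
  have e3: "(\<Sum>\<phi>\<in>?P. \<Prod>v\<in>V. h (deg E ends v) (map (\<lambda>k. vf l \<phi> (c1.R v k)) [0..<deg E ends v])) =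
     (\<Sum>\<phi>\<in>?P. \<Prod>v\<in>V. of_int (sign (restrict_id sg (c2.Kset v))) *
         h (deg E ends v) (map (\<lambda>k. vf l \<phi> (flipS D (c2.R v k))) [0..<deg E ends v]))"
  proof (rule sum.cong[OF refl], rule prod.cong[OF refl])
    fix \<phi> v assume "\<phi> \<in> ?P" "v \<in> V"
    then show "h (deg E ends v) (map (\<lambda>k. vf l \<phi> (c1.R v k)) [0..<deg E ends v]) =
      of_int (sign (restrict_id sg (c2.Kset v))) * h (deg E ends v) (map (\<lambda>k. vf l \<phi> (flipS D (c2.R v k))) [0..<deg E ends v])"
      by (rule vertex_alt[OF ext, rotated])
  qed
  also have "\<dots> = (\<Prod>v\<in>V. of_int (sign (restrict_id sg (c2.Kset v)))) * S2'"
    unfolding S2'_def by (simp add: prod.distrib sum_distrib_left)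
  also have "(\<Prod>v\<in>V. of_int (sign (restrict_id sg (c2.Kset v)))) = (of_int (sign sg) :: complex)"
    unfolding sign_sg_blocks by simp
  also have "S2' = (-1)^card D * S2" unfolding S2'_def S2_def by (rule c2.stageB[OF ext DE])
  finally have S1: "(\<Sum>\<phi>\<in>?P. \<Prod>v\<in>V. h (deg E ends v) (vertex_args l E ends \<omega>1 kin1 kout1 \<phi> v)) =
      of_int (sign sg) * ((-1)^card D * S2)" using e1 by simp
  have sg: "sign sg = (-1)^card D * (r1 * r2)"
    unfolding r1_def r2_def sign_sg_parts signs_rel[symmetric] by (simp add: mult.assoc)
  have n1: "(-1::complex) ^ num_circuits E \<omega>1 kin1 kout1 = of_int ((-1)^card E * r1)"
    unfolding r1_def c1.nc_sign[symmetric] by simp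
  have n2: "(-1::complex) ^ num_circuits E \<omega>2 kin2 kout2 = of_int ((-1)^card E * r2)"
    unfolding r2_def c2.nc_sign[symmetric] by simp
  have r1sq: "r1 * r1 = 1" unfolding r1_def by simp
  have intid: "((-1)^card E * r1) * ((-1)^card D * (r1 * r2)) * (-1)^card D = (-1::int)^card E * r2"
  proof -
    have "((-1)^card E * r1) * ((-1)^card D * (r1 * r2)) * (-1)^card D =
          (-1::int)^card E * r2 * (r1 * r1) * ((-1)^card D * (-1)^card D)" by (simp add: algebra_simps)
    also have "\<dots> = (-1::int)^card E * r2" using r1sq neg1_sq by simp
    finally show ?thesis .
  qed
  have "s_h l h V E ends \<omega>1 kin1 kout1 = of_int ((-1)^card E * r1) * (of_int ((-1)^card D * (r1 * r2)) * ((-1)^card D * S2))"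
    unfolding s_h_def S1 n1 sg ..
  also have "\<dots> = of_int (((-1)^card E * r1) * ((-1)^card D * (r1 * r2)) * (-1)^card D) * S2"
    by (simp add: algebra_simps)
  also have "\<dots> = of_int ((-1::int)^card E * r2) * S2" unfolding intid ..
  also have "\<dots> = s_h l h V E ends \<omega>2 kin2 kout2" unfolding s_h_def e2 n2 ..
  finally show ?thesis .
qed

end

theorem proposition1:
  fixes l :: nat
    and h :: "nat \<Rightarrow> (nat \<Rightarrow> complex) list \<Rightarrow> complex"
    and V :: "'v set" and E :: "'e set" and ends :: "'e \<Rightarrow> 'v \<times> 'v"
    and \<omega>1 \<omega>2 :: "'e \<Rightarrow> 'v \<times> 'v"
    and kin1 kout1 kin2 kout2 :: "'e \<Rightarrow> nat"
  assumes "ext_dual l h"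
    and "eulerian_graph V E ends"
    and "eulerian_orientation V E ends \<omega>1"
    and "local_ordering V E ends \<omega>1 kin1 kout1"
    and "eulerian_orientation V E ends \<omega>2"
    and "local_ordering V E ends \<omega>2 kin2 kout2"
  shows "s_h l h V E ends \<omega>1 kin1 kout1 = s_h l h V E ends \<omega>2 kin2 kout2"
proof -
  have "two V E ends \<omega>1 kin1 kout1 \<omega>2 kin2 kout2"
    unfolding two_def cfg_def using assms by blast
  then interpret two V E ends \<omega>1 kin1 kout1 \<omega>2 kin2 kout2 .
  show ?thesis by (rule main[OF assms(1)])
qed

end
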